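(* Let $n$ be a positive integer and let $\mathcal{P}$ be a nonzero linear partial difference operator with constant coefficients acting on functions $f:\mathbb{Z}^n\to\mathbb{C}$, i.e. $\mathcal{P} f(m_1,\dots,m_n)=\sum_{\alpha\in A} c_\alpha f(m_1+\alpha_1,\dots,m_n+\alpha_n)$ for a finite set $A\subset\mathbb{Z}^n$ and complex constants $c_\alpha$. Then there exists a function $f:\mathbb{Z}^n\to\mathbb{C}$ such that $\mathcal{P} f(m_1,\dots,m_n)=\delta(m_1,\dots,m_n)$ for all $(m_1,\dots,m_n)\in\mathbb{Z}^n$, where $\delta(m_1,\dots,m_n)=1$ if $(m_1,\dots,m_n)=(0,\dots,0)$ and $\delta(m_1,\dots,m_n)=0$ otherwise.
   Context: The operator $\mathcal{P}$ is called nonzero if it is not the zero operator, equivalently if its symbol, the Laurent polynomial $P(z_1,\dots,z_n)=\sum_{\alpha\in A}c_\alpha z_1^{\alpha_1}\cdots z_n^{\alpha_n}$, is not the zero Laurent polynomial. The paper remarks that the complex numbers may be replaced by any field. *)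

theory Defs
  imports "HOL-Analysis.Analysis"
begin

definition diff_op :: "(int ^ 'n) set \<Rightarrow> (int ^ 'n \<Rightarrow> complex) \<Rightarrow> (int ^ 'n \<Rightarrow> complex) \<Rightarrow> int ^ 'n \<Rightarrow> complex"
  where "diff_op A c f m = (\<Sum>\<alpha>\<in>A. c \<alpha> * f (m + \<alpha>))"

text \<open>Symbol nonzero: some coefficient on A is nonzero (exponents in A are distinct).\<close>
definition nonzero_op :: "(int ^ 'n) set \<Rightarrow> (int ^ 'n \<Rightarrow> complex) \<Rightarrow> bool"
  where "nonzero_op A c \<longleftrightarrow> (\<exists>\<alpha>\<in>A. c \<alpha> \<noteq> 0)"

definition delta :: "int ^ 'n \<Rightarrow> complex"
  where "delta m = (if m = 0 then 1 else 0)"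

end

theory Submission
  imports Defs "HOL-Computational_Algebra.Polynomial" "HOL-Library.Countable"
begin

definition lin :: "int ^ 'n \<Rightarrow> int ^ 'n \<Rightarrow> int" where
  "lin w k = (\<Sum>i\<in>UNIV. w $ i * k $ i)"

lemma lin_add: "lin w (a + b) = lin w a + lin w b"
  by (simp add: lin_def distrib_left sum.distrib)

lemma lin_diff: "lin w (a - b) = lin w a - lin w b"
  by (simp add: lin_def right_diff_distrib sum_subtractf)

lemma lin_zero: "lin w 0 = 0"
  by (simp add: lin_def)

function g :: "int ^ 'n \<Rightarrow> (int ^ 'n) set \<Rightarrow> (int ^ 'n \<Rightarrow> complex) \<Rightarrow> int ^ 'n \<Rightarrow> int ^ 'n \<Rightarrow> complex" where
  "g w S c b k = (if lin w k < lin w b then 0 else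
     (delta (k - b) - (\<Sum>\<beta>\<in>{\<beta>\<in>S. lin w \<beta> < lin w b}. c \<beta> * g w S c b (k - b + \<beta>))) / c b)"
  by pat_completeness auto
termination
  apply (relation "Wellfounded.measure (\<lambda>(w,S,c,b,k). nat (lin w k - lin w b + 1))")
   apply simp
  apply (auto simp: lin_add lin_diff)
  done

declare g.simps[simp del]

lemma exists_weight:
  fixes S :: "(int ^ 'n) set"
  assumes "finite S"
  shows "\<exists>w. inj_on (lin w) S"
proof -
  define p :: "int ^ 'n \<Rightarrow> int poly" where
    "p d = (\<Sum>i\<in>UNIV. monom (d $ i) (to_nat i))" for d
  have coeffp: "coeff (p d) (to_nat j) = d $ j" for d j
  proof -
    have "coeff (p d) (to_nat j) = (\<Sum>i\<in>UNIV. if to_nat i = to_nat j then d $ i else 0)"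
      by (simp add: p_def coeff_sum coeff_monom)
    also have "\<dots> = (\<Sum>i\<in>UNIV. if i = j then d $ i else 0)"
      by (rule sum.cong) auto
    finally show ?thesis by simp
  qed
  have pnz: "p d \<noteq> 0" if "d \<noteq> 0" for d
  proof
    assume "p d = 0"
    then have "d $ j = 0" for j using coeffp[of d j] by simp
    then have "d = 0" by (simp add: vec_eq_iff)
    with that show False by simp
  qed
  have polyp: "poly (p d) t = (\<Sum>i\<in>UNIV. d $ i * t ^ to_nat i)" for d t
    by (simp add: p_def poly_sum poly_monom)
  define D where "D = ((\<lambda>(a,b). a - b) ` (S \<times> S)) - {0}"
  have finD: "finite D" using assms by (simp add: D_def)
  define R where "R = (\<Union>d\<in>D. {t. poly (p d) t = 0})"
  have "finite R" unfolding R_def using finD pnz poly_roots_finite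
    by (auto simp: D_def)
  then obtain t :: int where t: "t \<notin> R"
    using ex_new_if_finite[OF infinite_UNIV_int] by blast
  define w :: "int ^ 'n" where "w = (\<chi> i. t ^ to_nat i)"
  have "inj_on (lin w) S"
  proof (rule inj_onI)
    fix a b assume ab: "a \<in> S" "b \<in> S" "lin w a = lin w b"
    show "a = b"
    proof (rule ccontr)
      assume "a \<noteq> b"
      then have "a - b \<in> D" using ab by (force simp: D_def)
      then have "poly (p (a - b)) t \<noteq> 0" using t by (auto simp: R_def)
      moreover have "poly (p (a - b)) t = lin w (a - b)"
        by (simp add: polyp lin_def w_def mult.commute)
      ultimately show False using ab by (simp add: lin_diff)
    qed
  qed
  then show ?thesis by blast
qed

theorem mainTheorem1:
  fixes A :: "(int ^ 'n) set" and c :: "int ^ 'n \<Rightarrow> complex"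
  assumes "finite A" and "nonzero_op A c"
  shows "\<exists>f :: int ^ 'n \<Rightarrow> complex. \<forall>m. diff_op A c f m = delta m"
proof -
  define S where "S = {\<alpha>\<in>A. c \<alpha> \<noteq> 0}"
  have finS: "finite S" using assms(1) by (simp add: S_def)
  have neS: "S \<noteq> {}" using assms(2) by (auto simp: S_def nonzero_op_def)
  obtain w where inj: "inj_on (lin w) S" using exists_weight[OF finS] by blast
  obtain b where bS: "b \<in> S" and bmax: "\<forall>\<beta>\<in>S. lin w \<beta> \<le> lin w b"
  proof -
    have "Max (lin w ` S) \<in> lin w ` S" using finS neS by simp
    then obtain b where "b \<in> S" "lin w b = Max (lin w ` S)" by auto
    moreover have "\<forall>\<beta>\<in>S. lin w \<beta> \<le> Max (lin w ` S)" using finS by simp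
    ultimately show ?thesis using that by auto
  qed
  have cb: "c b \<noteq> 0" using bS by (simp add: S_def)
  have Sless: "{\<beta>\<in>S. lin w \<beta> < lin w b} = S - {b}"
    using bmax inj bS by (auto simp: inj_on_def order_le_less)
  define f where "f = g w S c b"
  have "diff_op A c f m = delta m" for m
  proof -
    have "diff_op A c f m = (\<Sum>\<alpha>\<in>S. c \<alpha> * f (m + \<alpha>))"
      unfolding diff_op_def S_def
      by (rule sum.mono_neutral_right[OF assms(1)]) auto
    also have "\<dots> = c b * f (m + b) + (\<Sum>\<alpha>\<in>S - {b}. c \<alpha> * f (m + \<alpha>))"
      using finS bS by (simp add: sum.remove)
    also have "\<dots> = delta m"
    proof (cases "lin w m < 0")
      case True
      have z: "f (m + \<alpha>) = 0" if "\<alpha> \<in> S" for \<alpha>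
      proof -
        have "lin w (m + \<alpha>) < lin w b" using True bmax that by (force simp: lin_add)
        then show ?thesis unfolding f_def by (subst g.simps) simp
      qed
      have "m \<noteq> 0" using True lin_zero[of w] by auto
      then show ?thesis using z bS by (simp add: delta_def)
    next
      case False
      have "f (m + b) = (delta m - (\<Sum>\<beta>\<in>S - {b}. c \<beta> * f (m + \<beta>))) / c b"
        unfolding f_def using False Sless by (subst g.simps) (simp add: lin_add)
      then show ?thesis using cb by simp
    qed
    finally show ?thesis .
  qed
  then show ?thesis by blast
qed

end
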